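(* Let $\langle S,L,\tau,\ell\rangle$ be a labelled Markov chain, $R$ a bisimulation with $S^2_\Delta\subseteq R\subseteq\,\sim$, and $P\in\mathcal{P}$ a maximal $R$-support policy. Then $\mathrm{Filter}(R)=\{(s,t)\in R\mid$ there is a path from $(s,t)$ to $S^2_\Delta$ in $\langle S\times S,P\rangle\}$.
   Context: Labelled Markov chain: finite $S$, finite $L$, $\tau:S\to\mathcal{D}(S)$, $\ell:S\to L$. $\Omega(\mu,\nu)$ = couplings. A bisimulation is an equivalence relation $R$ such that for $(s,t)\in R$, $\ell(s)=\ell(t)$ and some $\omega\in\Omega(\tau(s),\tau(t))$ has support in $R$; $\sim$ is bisimilarity. $S^2_\Delta=\{(s,s)\}$, $S^2_1=\{(s,t)\mid\ell(s)\ne\ell(t)\}$, $S^2_{0?}=(S\times S)\setminus(S^2_\Delta\cup S^2_1)$. $\mathcal{P}$ = policies $P:S\times S\to\mathcal{D}(S\times S)$ with $P(s,t)\in\Omega(\tau(s),\tau(t))$ for $(s,t)\notin S^2_1$ and $P(s,t)$ the point mass at $(s,t)$ for $(s,t)\in S^2_1$; a path in $\langle S\times S,P\rangle$ is a sequence of pairs with positive transition probabilities between consecutive ones. $P$ is a maximal $R$-support policy if $\mathrm{support}(P(s,t))=(\mathrm{support}(\tau(s))\times\mathrm{support}(\tau(t)))\cap R$ for all $(s,t)\in R\cap S^2_{0?}$. $R$ supports a path $(u_1,v_1)\dots(u_n,v_n)$ if $(u_i,v_i)\in R$ and $\mathrm{support}(P(u_i,v_i))\subseteq R$ for all $i$.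 $\mathrm{Filter}(R)=\{(s,t)\in R\mid\exists P'\in\mathcal{P}$ such that $R$ supports a path from $(s,t)$ to $S^2_\Delta$ in $\langle S\times S,P'\rangle\}$. *)

theory Defs
  imports "HOL-Probability.Probability"
begin

definition couplings :: "'s pmf \<Rightarrow> 's pmf \<Rightarrow> ('s \<times> 's) pmf set" where
  "couplings \<mu> \<nu> = {\<omega>. map_pmf fst \<omega> = \<mu> \<and> map_pmf snd \<omega> = \<nu>}"

definition is_bisimulation ::
  "('s \<Rightarrow> 's pmf) \<Rightarrow> ('s \<Rightarrow> 'l) \<Rightarrow> ('s \<times> 's) set \<Rightarrow> bool" where
  "is_bisimulation \<tau> lab R \<longleftrightarrow> equiv UNIV R \<and>
     (\<forall>(s,t)\<in>R. lab s = lab t \<and>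
        (\<exists>\<omega>\<in>couplings (\<tau> s) (\<tau> t). set_pmf \<omega> \<subseteq> R))"

definition bisimilarity :: "('s \<Rightarrow> 's pmf) \<Rightarrow> ('s \<Rightarrow> 'l) \<Rightarrow> ('s \<times> 's) set" where
  "bisimilarity \<tau> lab = \<Union>{R. is_bisimulation \<tau> lab R}"

definition diag :: "('s \<times> 's) set" where
  "diag = {(s, s) | s. True}"

definition S2_one :: "('s \<Rightarrow> 'l) \<Rightarrow> ('s \<times> 's) set" where
  "S2_one lab = {(s, t). lab s \<noteq> lab t}"

definition S2_zq :: "('s \<Rightarrow> 'l) \<Rightarrow> ('s \<times> 's) set" where
  "S2_zq lab = UNIV - (diag \<union> S2_one lab)"

definition policies ::
  "('s \<Rightarrow> 's pmf) \<Rightarrow> ('s \<Rightarrow> 'l) \<Rightarrow> ('s \<times> 's \<Rightarrow> ('s \<times> 's) pmf) set" where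
  "policies \<tau> lab = {P. (\<forall>s t. (s, t) \<notin> S2_one lab \<longrightarrow> P (s, t) \<in> couplings (\<tau> s) (\<tau> t)) \<and>
                          (\<forall>s t. (s, t) \<in> S2_one lab \<longrightarrow> P (s, t) = return_pmf (s, t))}"

definition is_path :: "('s \<times> 's \<Rightarrow> ('s \<times> 's) pmf) \<Rightarrow> ('s \<times> 's) list \<Rightarrow> bool" where
  "is_path P xs \<longleftrightarrow> xs \<noteq> [] \<and>
     (\<forall>i. Suc i < length xs \<longrightarrow> pmf (P (xs ! i)) (xs ! Suc i) > 0)"

definition path_from_to ::
  "('s \<times> 's \<Rightarrow> ('s \<times> 's) pmf) \<Rightarrow> ('s \<times> 's) list \<Rightarrow> 's \<times> 's \<Rightarrow> ('s \<times> 's) set \<Rightarrow> bool" where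
  "path_from_to P xs x T \<longleftrightarrow> is_path P xs \<and> hd xs = x \<and> last xs \<in> T"

definition max_support_policy ::
  "('s \<Rightarrow> 's pmf) \<Rightarrow> ('s \<Rightarrow> 'l) \<Rightarrow> ('s \<times> 's) set \<Rightarrow> ('s \<times> 's \<Rightarrow> ('s \<times> 's) pmf) \<Rightarrow> bool" where
  "max_support_policy \<tau> lab R P \<longleftrightarrow>
     (\<forall>s t. (s, t) \<in> R \<inter> S2_zq lab \<longrightarrow>
        set_pmf (P (s, t)) = (set_pmf (\<tau> s) \<times> set_pmf (\<tau> t)) \<inter> R)"

definition supports_path ::
  "('s \<times> 's) set \<Rightarrow> ('s \<times> 's \<Rightarrow> ('s \<times> 's) pmf) \<Rightarrow> ('s \<times> 's) list \<Rightarrow> bool" where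
  "supports_path R P xs \<longleftrightarrow> (\<forall>x\<in>set xs. x \<in> R \<and> set_pmf (P x) \<subseteq> R)"

definition Filter ::
  "('s \<Rightarrow> 's pmf) \<Rightarrow> ('s \<Rightarrow> 'l) \<Rightarrow> ('s \<times> 's) set \<Rightarrow> ('s \<times> 's) set" where
  "Filter \<tau> lab R = {(s, t) \<in> R. \<exists>P'\<in>policies \<tau> lab. \<exists>xs.
       path_from_to P' xs (s, t) diag \<and> supports_path R P' xs}"

end

theory Submission
  imports Defs
begin

lemma is_path_Cons:
  "is_path Q (a # ys) \<longleftrightarrow> (ys = [] \<or> (pmf (Q a) (hd ys) > 0 \<and> is_path Q ys))"
proof (cases ys)
  case Nil thus ?thesis by (simp add: is_path_def)
next
  case (Cons b zs)
  show ?thesis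
  proof
    assume h: "is_path Q (a # ys)"
    have "pmf (Q a) (hd ys) > 0" using h Cons unfolding is_path_def by (metis length_Cons less_Suc_eq_0_disj nth_Cons_0 nth_Cons_Suc zero_less_Suc list.sel(1))
    moreover have "is_path Q ys" using h Cons unfolding is_path_def
      by (metis Suc_less_eq length_Cons list.distinct(1) nth_Cons_Suc)
    ultimately show "ys = [] \<or> (pmf (Q a) (hd ys) > 0 \<and> is_path Q ys)" by simp
  next
    assume h: "ys = [] \<or> (pmf (Q a) (hd ys) > 0 \<and> is_path Q ys)"
    hence h2: "pmf (Q a) b > 0" "is_path Q ys" using Cons by auto
    show "is_path Q (a # ys)" unfolding is_path_def
    proof (intro conjI allI impI)
      fix i assume "Suc i < length (a # ys)"
      then show "pmf (Q (((a # ys) ! i))) ((a # ys) ! Suc i) > 0"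
        using h2 Cons by (cases i) (auto simp: is_path_def)
    qed simp
  qed
qed

lemma truncate_path:
  assumes "is_path Q xs" "last xs \<in> T"
  shows "\<exists>ys. is_path Q ys \<and> hd ys = hd xs \<and> last ys \<in> T \<and> set ys \<subseteq> set xs
           \<and> (\<forall>y\<in>set (butlast ys). y \<notin> T)"
  using assms
proof (induction xs)
  case Nil thus ?case by (simp add: is_path_def)
next
  case (Cons a rest)
  show ?case
  proof (cases "a \<in> T")
    case True
    thus ?thesis by (rule_tac x="[a]" in exI) (simp add: is_path_def)
  next
    case False
    hence ne: "rest \<noteq> []" using Cons.prems by auto
    hence p: "pmf (Q a) (hd rest) > 0" "is_path Q rest" using Cons.prems(1) is_path_Cons by blast+
    have "last rest \<in> T" using Cons.prems ne by simp
    then obtain ys where ys: "is_path Q ys" "hd ys = hd rest" "last ys \<in> T" "set ys \<subseteq> set rest"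
      "\<forall>y\<in>set (butlast ys). y \<notin> T" using Cons.IH p by blast
    have yne: "ys \<noteq> []" using ys(1) by (simp add: is_path_def)
    show ?thesis
      apply (rule_tac x="a # ys" in exI)
      using ys yne p False by (auto simp: is_path_Cons)
  qed
qed

lemma coupling_fst:
  assumes "\<omega> \<in> couplings \<mu> \<nu>" "(a, b) \<in> set_pmf \<omega>"
  shows "a \<in> set_pmf \<mu>" "b \<in> set_pmf \<nu>"
proof -
  have "set_pmf (map_pmf fst \<omega>) = fst ` set_pmf \<omega>" by simp
  thus "a \<in> set_pmf \<mu>" using assms unfolding couplings_def by force
  have "set_pmf (map_pmf snd \<omega>) = snd ` set_pmf \<omega>" by simp
  thus "b \<in> set_pmf \<nu>" using assms unfolding couplings_def by force
qed

theorem mainTheorem18: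
  fixes \<tau> :: "'s::finite \<Rightarrow> 's pmf" and lab :: "'s \<Rightarrow> 'l::finite"
    and R :: "('s \<times> 's) set" and P :: "'s \<times> 's \<Rightarrow> ('s \<times> 's) pmf"
  assumes "is_bisimulation \<tau> lab R"
    and "diag \<subseteq> R" and "R \<subseteq> bisimilarity \<tau> lab"
    and "P \<in> policies \<tau> lab"
    and "max_support_policy \<tau> lab R P"
  shows "Filter \<tau> lab R = {(s, t) \<in> R. \<exists>xs. path_from_to P xs (s, t) diag}"
proof -
  have labR: "\<And>s t. (s, t) \<in> R \<Longrightarrow> lab s = lab t"
    using assms(1) unfolding is_bisimulation_def by blast
  have zq: "\<And>x. x \<in> R \<Longrightarrow> x \<notin> diag \<Longrightarrow> x \<in> S2_zq lab"
    using labR unfolding S2_zq_def S2_one_def by auto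
  have Pc: "\<And>s t. (s, t) \<in> R \<Longrightarrow> P (s, t) \<in> couplings (\<tau> s) (\<tau> t)"
    using assms(4) labR unfolding policies_def S2_one_def by auto
  have Psupp: "\<And>x. x \<in> R \<Longrightarrow> x \<notin> diag \<Longrightarrow> set_pmf (P x) = (set_pmf (\<tau> (fst x)) \<times> set_pmf (\<tau> (snd x))) \<inter> R"
    using assms(5) zq unfolding max_support_policy_def by (metis IntI prod.collapse)
  show ?thesis
  proof (rule set_eqI, rule iffI)
    fix x assume "x \<in> Filter \<tau> lab R"
    then obtain P' xs where x: "x \<in> R" "P' \<in> policies \<tau> lab" "path_from_to P' xs x diag"
      "supports_path R P' xs" unfolding Filter_def by auto
    then obtain ys where ys: "is_path P' ys" "hd ys = x" "last ys \<in> diag" "set ys \<subseteq> set xs"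
      "\<forall>y\<in>set (butlast ys). y \<notin> diag"
      using truncate_path unfolding path_from_to_def by metis
    have sup: "\<forall>y\<in>set ys. y \<in> R \<and> set_pmf (P' y) \<subseteq> R" using x(4) ys(4) unfolding supports_path_def by blast
    have "is_path P ys" using ys(1) ys(5) sup
    proof (induction ys)
      case Nil thus ?case by (simp add: is_path_def)
    next
      case (Cons a rest)
      show ?case
      proof (cases "rest = []")
        case True thus ?thesis by (simp add: is_path_def)
      next
        case False
        have a: "a \<notin> diag" "a \<in> R" "set_pmf (P' a) \<subseteq> R" using Cons.prems False by auto
        have p: "pmf (P' a) (hd rest) > 0" "is_path P' rest" using Cons.prems(1) False is_path_Cons by blast+
        have h1: "hd rest \<in> set_pmf (P' a)" using p(1) by (simp add: set_pmf_iff)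
        have lab_eq: "lab (fst a) = lab (snd a)" using labR a(2) by (cases a) auto
        have "P' a \<in> couplings (\<tau> (fst a)) (\<tau> (snd a))"
          using x(2) lab_eq unfolding policies_def S2_one_def by (cases a) auto
        hence "fst (hd rest) \<in> set_pmf (\<tau> (fst a))" "snd (hd rest) \<in> set_pmf (\<tau> (snd a))"
          using coupling_fst h1 by (metis prod.collapse)+
        hence "hd rest \<in> set_pmf (P a)" using Psupp[OF a(2) a(1)] h1 a(3) by (auto simp: mem_Times_iff)
        hence "pmf (P a) (hd rest) > 0" by (simp add: pmf_positive)
        moreover have "is_path P rest" using Cons.IH p(2) Cons.prems False by simp
        ultimately show ?thesis using is_path_Cons by blast
      qed
    qed
    thus "x \<in> {(s, t) \<in> R. \<exists>xs. path_from_to P xs (s, t) diag}"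
      using x(1) ys unfolding path_from_to_def by auto
  next
    fix x assume "x \<in> {(s, t) \<in> R. \<exists>xs. path_from_to P xs (s, t) diag}"
    then obtain xs where x: "x \<in> R" "path_from_to P xs x diag" by auto
    then obtain ys where ys: "is_path P ys" "hd ys = x" "last ys \<in> diag"
      "\<forall>y\<in>set (butlast ys). y \<notin> diag"
      using truncate_path unfolding path_from_to_def by metis
    define P' where "P' = (\<lambda>y. if y \<in> diag then map_pmf (\<lambda>u. (u, u)) (\<tau> (fst y)) else P y)"
    have diagI: "\<And>u. (u, u) \<in> diag" unfolding diag_def by auto
    have P'pol: "P' \<in> policies \<tau> lab"
      using assms(4) unfolding policies_def P'_def
      apply (auto simp: couplings_def pmf.map_comp o_def S2_one_def diag_def)
      done
    have P'd: "\<And>y. y \<in> diag \<Longrightarrow> set_pmf (P' y) \<subseteq> R"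
    proof
      fix y z assume "y \<in> diag" "z \<in> set_pmf (P' y)"
      hence "z \<in> set_pmf (map_pmf (\<lambda>u. (u, u)) (\<tau> (fst y)))" unfolding P'_def by simp
      hence "z \<in> (\<lambda>u. (u, u)) ` set_pmf (\<tau> (fst y))" by simp
      then obtain u where "z = (u, u)" by blast
      hence "z \<in> diag" by (simp add: diagI)
      thus "z \<in> R" using assms(2) by (rule subsetD[rotated])
    qed
    have "hd ys \<in> R \<longrightarrow> is_path P' ys \<and> supports_path R P' ys" using ys(1) ys(3) ys(4)
    proof (induction ys)
      case Nil thus ?case by (simp add: is_path_def)
    next
      case (Cons a rest)
      show ?case
      proof (cases "rest = []")
        case True
        hence "a \<in> diag" using Cons.prems(2) by simp
        hence "set_pmf (P' a) \<subseteq> R" by (rule P'd)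
        thus ?thesis using True unfolding is_path_def supports_path_def by simp
      next
        case False
        { assume aR: "a \<in> R"
          have a: "a \<notin> diag" using Cons.prems False by auto
          have p: "pmf (P a) (hd rest) > 0" "is_path P rest" using Cons.prems(1) False is_path_Cons by blast+
          have Pa: "P' a = P a" using a unfolding P'_def by simp
          have sa: "set_pmf (P' a) \<subseteq> R" using Pa Psupp[OF aR a] by auto
          have "hd rest \<in> set_pmf (P' a)" using p(1) Pa by (simp add: set_pmf_iff)
          hence hR: "hd rest \<in> R" using sa by auto
          have "is_path P' rest \<and> supports_path R P' rest"
            using Cons.IH p(2) Cons.prems False hR by simp
          hence ?thesis using p(1) Pa aR sa
            by (auto simp: is_path_Cons supports_path_def)
        }
        thus ?thesis by simp
      qed
    qed
    hence "is_path P' ys \<and> supports_path R P' ys" using ys(2) x(1) by simp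
    hence "path_from_to P' ys x diag \<and> supports_path R P' ys"
      using ys(2,3) unfolding path_from_to_def by simp
    hence "\<exists>P'\<in>policies \<tau> lab. \<exists>xs. path_from_to P' xs x diag \<and> supports_path R P' xs"
      using P'pol by blast
    thus "x \<in> Filter \<tau> lab R" using x(1) unfolding Filter_def by (cases x) simp
  qed
qed

end
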